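(* Let $({\bm w}_j^0)_{j\ge1}$ be a sequence of i.i.d. random variables with law $\pi_0$, and let $f^*$ be a continuous function on $X$. Assume there exist a constant $C$ and a sequence of real numbers $(a_j)_{j\ge1}$ with $\sup_j|a_j|\le C$ such that \[ \lim_{m\to\infty}\frac1m\sum_{j=1}^m a_j\phi({\bm x};{\bm w}_j^0)=f^*({\bm x})\quad\text{for all }{\bm x}\in X. \] Then, with probability $1$ (over the sequence $({\bm w}_j^0)$), there exists a measurable function $a^*:\Omega\to\mathbb{R}$ with $|a^*({\bm w})|\le C$ for $\pi_0$-a.e. ${\bm w}$ such that \[ f^*({\bm x})=\int_\Omega a^*({\bm w})\phi({\bm x};{\bm w})\,d\pi_0({\bm w})\quad\text{for all }{\bm x}\in X. \] In particular $\|f^*\|_\infty\le C$.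
   Context: $X=[0,1]^d$; $\Omega\subset\mathbb{R}^p$ is compact; $\pi_0$ is a probability distribution with support $\Omega$; $\phi:X\times\Omega\to\mathbb{R}$ is continuous and bounded. For a function $f$ on $X$, $\|f\|_\infty:=\inf\{\|a\|_{L^\infty(\pi_0)}: f({\bm x})=\int a({\bm w})\phi({\bm x};{\bm w})d\pi_0({\bm w})\ \forall{\bm x}\in X\}$. *)

theory Defs
  imports "HOL-Probability.Probability"
begin

text \<open>The input domain X = [0,1]^d, with d given by the finite index type 'd.\<close>
definition unit_cube :: "(real ^ 'd) set" where
  "unit_cube = {x. \<forall>i. 0 \<le> x $ i \<and> x $ i \<le> 1}"

definition measure_support :: "'a::metric_space measure \<Rightarrow> 'a set" where
  "measure_support \<mu> = {w. \<forall>e>0. emeasure \<mu> (ball w e) > 0}"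

definition rf_norm ::
  "'p measure \<Rightarrow> 'p set \<Rightarrow> ('x \<Rightarrow> 'p \<Rightarrow> real) \<Rightarrow> 'x set \<Rightarrow> ('x \<Rightarrow> real) \<Rightarrow> ereal" where
  "rf_norm \<pi>0 \<Omega> \<phi> X f =
     Inf {esssup \<pi>0 (\<lambda>w. ereal \<bar>a w\<bar>) | a.
            a \<in> borel_measurable \<pi>0 \<and> (\<forall>x\<in>X. f x = (LINT w:\<Omega>|\<pi>0. a w * \<phi> x w))}"

end

theory Submission
  imports Defs "HOL-Library.Diagonal_Subsequence"
begin

lemma bounded_seq_conv_subseq:
  fixes f :: "nat \<Rightarrow> real" and s :: "nat \<Rightarrow> nat"
  assumes "\<And>m. \<bar>f m\<bar> \<le> B" "strict_mono s"
  shows "\<exists>r'. strict_mono r' \<and> (\<exists>l. (\<lambda>m. f ((s \<circ> r') m)) \<longlonglongrightarrow> l)"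
proof -
  have h1: "\<forall>n. (f \<circ> s) n \<in> {-B..B}"
  proof
    fix n show "(f \<circ> s) n \<in> {-B..B}" using assms(1)[of "s n"] by (auto simp: abs_le_iff)
  qed
  have h2: "seq_compact {-B..B}" by (intro compact_imp_seq_compact compact_Icc)
  obtain l r where "l \<in> {-B..B}" "strict_mono r" "((f \<circ> s) \<circ> r) \<longlonglongrightarrow> l"
    using seq_compactE[OF h2 h1] by blast
  then show ?thesis by (auto simp: o_def)
qed

lemma diagonal_conv:
  fixes u :: "nat \<Rightarrow> nat \<Rightarrow> real"
  assumes "\<And>i m. \<bar>u i m\<bar> \<le> B"
  shows "\<exists>r. strict_mono r \<and> (\<forall>i. \<exists>l. (\<lambda>m. u i (r m)) \<longlonglongrightarrow> l)"
proof -
  interpret subseqs "\<lambda>i s. \<exists>l. (\<lambda>m. u i (s m)) \<longlonglongrightarrow> l"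
  proof
    fix n and s :: "nat \<Rightarrow> nat" assume "strict_mono s"
    then show "\<exists>r'. strict_mono r' \<and> (\<exists>l. (\<lambda>m. u n ((s \<circ> r') m)) \<longlonglongrightarrow> l)"
      using bounded_seq_conv_subseq[of "u n", OF assms] by blast
  qed
  have "\<exists>l. (\<lambda>m. u i (diagseq m)) \<longlonglongrightarrow> l" for i
  proof -
    obtain l where "(\<lambda>m. u i ((diagseq o (+) (Suc i)) m)) \<longlonglongrightarrow> l"
    proof (atomize_elim, rule diagseq_holds)
      fix r s n
      assume "strict_mono (r :: nat \<Rightarrow> nat)" "\<exists>l. (\<lambda>m. u n (s m)) \<longlonglongrightarrow> l"
      then obtain l where "(\<lambda>m. u n (s m)) \<longlonglongrightarrow> l" by auto
      hence "((\<lambda>m. u n (s m)) o r) \<longlonglongrightarrow> l" using \<open>strict_mono r\<close>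
        by (rule LIMSEQ_subseq_LIMSEQ)
      thus "\<exists>l. (\<lambda>m. u n ((s \<circ> r) m)) \<longlonglongrightarrow> l" by (auto simp: o_def)
    qed
    hence "(\<lambda>m. u i (diagseq (m + Suc i))) \<longlonglongrightarrow> l" by (simp add: ac_simps)
    hence "(\<lambda>m. u i (diagseq m)) \<longlonglongrightarrow> l" by (rule LIMSEQ_offset)
    thus ?thesis ..
  qed
  then show ?thesis using subseq_diagseq by blast
qed

lemma slln_bounded:
  fixes W :: "nat \<Rightarrow> 's \<Rightarrow> 'a::topological_space" and g :: "'a \<Rightarrow> real"
  assumes M: "prob_space M"
    and Wm: "\<And>j. j \<ge> 1 \<Longrightarrow> W j \<in> M \<rightarrow>\<^sub>M borel"
    and ind: "prob_space.indep_vars M (\<lambda>_. borel) W {1..}"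
    and dist: "\<And>j. j \<ge> 1 \<Longrightarrow> distr M borel (W j) = \<pi>0"
    and gm: "g \<in> borel_measurable borel" and gb: "\<And>w. \<bar>g w\<bar> \<le> B" and Bpos: "B > 0"
  shows "AE \<omega> in M. (\<lambda>m. (1 / real m) * (\<Sum>j=1..m. g (W j \<omega>))) \<longlonglongrightarrow> integral\<^sup>L \<pi>0 g"
proof -
  interpret prob_space M by (rule M)
  define \<mu> where "\<mu> = integral\<^sup>L \<pi>0 g"
  have gWm[measurable]: "(\<lambda>\<omega>. g (W j \<omega>)) \<in> borel_measurable M" if "j \<ge> 1" for j
    using measurable_comp[OF Wm[OF that] gm] by (simp add: o_def)
  have Eg: "expectation (\<lambda>\<omega>. g (W j \<omega>)) = \<mu>" if "j \<ge> 1" for j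
    using integral_distr[OF Wm[OF that] gm] dist[OF that] by (simp add: \<mu>_def)
  have main: "AE \<omega> in M. eventually (\<lambda>m. \<bar>(1 / real m) * (\<Sum>j=1..m. g (W j \<omega>)) - \<mu>\<bar> < e) sequentially"
    if e: "e > 0" for e
  proof -
    define q where "q = exp (- (e^2 / (2 * B^2)))"
    have q: "0 \<le> q" "q < 1" using e Bpos by (auto simp: q_def)
    define A where "A m = {\<omega> \<in> space M. m \<ge> 1 \<and> real m * e \<le> \<bar>(\<Sum>j=1..m. g (W j \<omega>)) - real m * \<mu>\<bar>}" for m
    have Asets: "A m \<in> sets M" for m
    proof -
      have "(\<lambda>\<omega>. (\<Sum>j=1..m. g (W j \<omega>))) \<in> borel_measurable M"
        by (intro borel_measurable_sum) auto
      then show ?thesis unfolding A_def by measurable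
    qed
    have Abound: "prob (A m) \<le> 2 * q ^ m" for m
    proof (cases "m \<ge> 1")
      case False
      then have "A m = {}" by (auto simp: A_def)
      then show ?thesis using q by simp
    next
      case True
      interpret H: Hoeffding_ineq M "{1..m}" "\<lambda>j \<omega>. g (W j \<omega>)" "\<lambda>_. -B" "\<lambda>_. B"
        "\<Sum>j\<in>{1..m}. expectation (\<lambda>\<omega>. g (W j \<omega>))"
      proof unfold_locales
        show "finite {1..m}" by simp
        show "indep_vars (\<lambda>_. borel) (\<lambda>j \<omega>. g (W j \<omega>)) {1..m}"
          by (rule indep_vars_subset[OF indep_vars_compose2[OF ind, of "\<lambda>_. g" "\<lambda>_. borel"]])
             (use gm in auto)
        show "AE x in M. g (W i x) \<in> {- B..B}" for i
        proof (intro AE_I2)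
          fix x show "g (W i x) \<in> {- B..B}" using gb[of "W i x"] by (auto simp: abs_le_iff)
        qed
      qed simp
      have s: "(\<Sum>j\<in>{1..m}. expectation (\<lambda>\<omega>. g (W j \<omega>))) = real m * \<mu>"
        using Eg by simp
      have d: "(\<Sum>i\<in>{1..m}. (B - - B)\<^sup>2) = real m * (4 * B^2)"
        by (simp add: power2_eq_square algebra_simps)
      have "prob {x\<in>space M. \<bar>(\<Sum>i\<in>{1..m}. g (W i x)) - real m * \<mu>\<bar> \<ge> real m * e}
            \<le> 2 * exp (-2 * (real m * e)\<^sup>2 / (real m * (4 * B^2)))"
        using H.Hoeffding_ineq_abs_ge[of "real m * e"] e True Bpos unfolding s d by simp
      also have "-2 * (real m * e)\<^sup>2 / (real m * (4 * B^2)) = real m * (- (e^2 / (2 * B^2)))"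
        using True Bpos by (simp add: power2_eq_square field_simps)
      also have "exp \<dots> = q ^ m" unfolding q_def by (rule exp_of_nat_mult)
      finally show ?thesis using True by (simp add: A_def mult.commute)
    qed
    have summ: "summable (\<lambda>m. measure M (A m))"
    proof (rule summable_comparison_test')
      show "summable (\<lambda>m. 2 * q ^ m)" using q by (intro summable_mult summable_geometric) auto
      show "norm (measure M (A m)) \<le> 2 * q ^ m" for m using Abound[of m] by simp
    qed
    have "AE \<omega> in M. eventually (\<lambda>m. \<omega> \<in> space M - A m) sequentially"
      by (rule borel_cantelli_AE1) (use Asets summ in \<open>auto simp: less_top[symmetric]\<close>)
    then show ?thesis
    proof (rule AE_mp, intro AE_I2 impI)
      fix \<omega> assume \<omega>: "\<omega> \<in> space M" and ev: "eventually (\<lambda>m. \<omega> \<in> space M - A m) sequentially"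
      have "eventually (\<lambda>m. m \<ge> 1) sequentially" by (rule eventually_ge_at_top)
      with ev show "eventually (\<lambda>m. \<bar>(1 / real m) * (\<Sum>j=1..m. g (W j \<omega>)) - \<mu>\<bar> < e) sequentially"
      proof eventually_elim
        case (elim m)
        then have m: "real m > 0" by simp
        from elim \<omega> have "\<bar>(\<Sum>j=1..m. g (W j \<omega>)) - real m * \<mu>\<bar> < real m * e"
          by (auto simp: A_def)
        also have "\<bar>(\<Sum>j=1..m. g (W j \<omega>)) - real m * \<mu>\<bar>
            = real m * \<bar>(1 / real m) * (\<Sum>j=1..m. g (W j \<omega>)) - \<mu>\<bar>"
          using m by (simp add: field_simps abs_mult[symmetric])
        finally show ?case using m by simp
      qed
    qed
  qed
  have "AE \<omega> in M. \<forall>k::nat. eventually (\<lambda>m. \<bar>(1 / real m) * (\<Sum>j=1..m. g (W j \<omega>)) - \<mu>\<bar> < 1 / Suc k) sequentially"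
    unfolding AE_all_countable by (intro allI main) simp
  then show ?thesis
  proof (rule AE_mp, intro AE_I2 impI)
    fix \<omega> assume H: "\<forall>k::nat. eventually (\<lambda>m. \<bar>(1 / real m) * (\<Sum>j=1..m. g (W j \<omega>)) - \<mu>\<bar> < 1 / Suc k) sequentially"
    show "(\<lambda>m. (1 / real m) * (\<Sum>j=1..m. g (W j \<omega>))) \<longlonglongrightarrow> integral\<^sup>L \<pi>0 g"
      unfolding \<mu>_def[symmetric]
    proof (rule LIMSEQ_I)
      fix r :: real assume "r > 0"
      then obtain k :: nat where k: "1 / Suc k < r"
        using nat_approx_posE by blast
      from H[rule_format, of k] obtain N where "\<forall>m\<ge>N. \<bar>(1 / real m) * (\<Sum>j=1..m. g (W j \<omega>)) - \<mu>\<bar> < 1 / Suc k"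
        by (auto simp: eventually_sequentially)
      then show "\<exists>N. \<forall>m\<ge>N. norm ((1 / real m) * (\<Sum>j=1..m. g (W j \<omega>)) - \<mu>) < r"
        using k by (auto intro!: exI[of _ N] simp: real_norm_def)
    qed
  qed
qed

lemma support_AE:
  fixes \<pi>0 :: "'a::{metric_space,second_countable_topology} measure"
  assumes "sets \<pi>0 = sets borel" "measure_support \<pi>0 = \<Omega>"
  shows "AE w in \<pi>0. w \<in> \<Omega>"
proof -
  define F where "F = {ball w e | w e. e > 0 \<and> emeasure \<pi>0 (ball w e) = 0}"
  have "\<And>S. S \<in> F \<Longrightarrow> open S" by (auto simp: F_def)
  then obtain F' where F': "F' \<subseteq> F" "countable F'" "\<Union>F' = \<Union>F" by (rule Lindelof)
  have sp: "space \<pi>0 = UNIV" using sets_eq_imp_space_eq[OF assms(1)] by simp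
  have null: "\<Union>F' \<in> null_sets \<pi>0"
  proof -
    have "(\<Union>S\<in>F'. S) \<in> null_sets \<pi>0"
    proof (rule null_sets_UN')
    show "countable F'" by fact
    fix S assume "S \<in> F'"
    then obtain w e where "S = ball w e" "emeasure \<pi>0 (ball w e) = 0" using F' by (auto simp: F_def)
    moreover have "ball w e \<in> sets \<pi>0" using assms(1) by simp
    ultimately show "S \<in> null_sets \<pi>0" by auto
  qed
  then show ?thesis by simp
  qed
  have "{w \<in> space \<pi>0. \<not> w \<in> \<Omega>} \<subseteq> \<Union>F'"
  proof
    fix w assume "w \<in> {w \<in> space \<pi>0. \<not> w \<in> \<Omega>}"
    then have "w \<notin> measure_support \<pi>0" using assms(2) by auto
    then obtain e where "e > 0" "\<not> emeasure \<pi>0 (ball w e) > 0" by (auto simp: measure_support_def)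
    then have "ball w e \<in> F" by (auto simp: F_def)
    then show "w \<in> \<Union>F'" using F'(3) \<open>e > 0\<close> by (metis UnionI centre_in_ball)
  qed
  then show ?thesis using null by (intro AE_I[where N="\<Union>F'"]) auto
qed

definition kap :: "nat \<Rightarrow> real^'p \<Rightarrow> int^'p" where
  "kap n v = (\<chi> i. \<lfloor>2^n * v$i\<rfloor>)"

lemma kap_refine:
  assumes "n \<le> n'" "kap n' v = kap n' u"
  shows "kap n v = kap n u"
proof -
  have eq: "\<lfloor>2^n * t\<rfloor> = \<lfloor>2^n' * t\<rfloor> div 2^(n'-n)" for t :: real
  proof -
    have p: "(2::real)^n' = 2^n * 2^(n'-n)" using assms(1) by (simp flip: power_add)
    have "(2::real)^n * t = 2^n' * t / real_of_int (2^(n'-n))"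
      unfolding p by simp
    then have "\<lfloor>(2::real)^n * t\<rfloor> = \<lfloor>2^n' * t / real_of_int (2^(n'-n))\<rfloor>" by simp
    also have "\<dots> = \<lfloor>2^n' * t\<rfloor> div 2^(n'-n)" by (rule floor_divide_real_eq_div) simp
    finally show ?thesis .
  qed
  have "\<lfloor>2^n' * v$i\<rfloor> = \<lfloor>2^n' * u$i\<rfloor>" for i
    using assms(2) by (metis kap_def vec_lambda_beta)
  then show ?thesis unfolding kap_def by (simp add: eq)
qed

lemma kap_diam:
  fixes v u :: "real^'p"
  assumes "kap n v = kap n u"
  shows "dist v u \<le> real CARD('p) / 2^n"
proof -
  have c: "\<bar>v$i - u$i\<bar> \<le> 1 / 2^n" for i
  proof -
    have e: "\<lfloor>2^n * v$i\<rfloor> = \<lfloor>2^n * u$i\<rfloor>"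
      using assms by (metis kap_def vec_lambda_beta)
    have "\<bar>2^n * v$i - 2^n * u$i\<bar> < 1"
      using e floor_correct[of "2^n * v$i"] floor_correct[of "2^n * u$i"] by linarith
    moreover have "\<bar>2^n * v$i - 2^n * u$i\<bar> = \<bar>v$i - u$i\<bar> * 2^n"
      by (simp only: right_diff_distrib[symmetric] abs_mult) simp
    ultimately have "\<bar>v$i - u$i\<bar> * 2^n < 1" by simp
    then show ?thesis by (simp add: field_simps)
  qed
  have "dist v u = norm (v - u)" by (simp add: dist_norm)
  also have "\<dots> \<le> (\<Sum>i\<in>UNIV. \<bar>(v - u)$i\<bar>)" by (rule norm_le_l1_cart)
  also have "\<dots> \<le> (\<Sum>i\<in>(UNIV::'p set). 1 / 2^n)" by (intro sum_mono) (use c in simp)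
  also have "\<dots> = real CARD('p) / 2^n" by simp
  finally show ?thesis .
qed

lemma kap_finite:
  fixes \<Omega> :: "(real^'p) set"
  assumes "bounded \<Omega>"
  shows "finite (kap n ` \<Omega>)"
proof -
  obtain R where R: "\<And>v. v \<in> \<Omega> \<Longrightarrow> norm v \<le> R" using assms by (auto simp: bounded_iff)
  define L where "L = \<lceil>2^n * R\<rceil>"
  have "kap n ` \<Omega> \<subseteq> vec_lambda ` (Pi\<^sub>E UNIV (\<lambda>_. {-L..L}))"
  proof
    fix k assume "k \<in> kap n ` \<Omega>"
    then obtain v where v: "v \<in> \<Omega>" "k = kap n v" by auto
    have b: "\<bar>\<lfloor>2^n * v$i\<rfloor>\<bar> \<le> L" for i
    proof -
      have "\<bar>v$i\<bar> \<le> R" using component_le_norm_cart[of v i] R[OF v(1)] by linarith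
      then have "\<bar>2^n * v$i\<bar> \<le> 2^n * R" by (simp add: abs_mult)
      then have "2^n * v$i \<le> 2^n * R" "- (2^n * R) \<le> 2^n * v$i" by linarith+
      then show ?thesis unfolding L_def by linarith
    qed
    have "-L \<le> \<lfloor>2^n * v$i\<rfloor> \<and> \<lfloor>2^n * v$i\<rfloor> \<le> L" for i
      using b[of i] unfolding abs_le_iff by linarith
    then have "(\<lambda>i. k$i) \<in> Pi\<^sub>E UNIV (\<lambda>_. {-L..L})" using v by (auto simp: kap_def)
    moreover have "k = vec_lambda (\<lambda>i. k$i)" by simp
    ultimately show "k \<in> vec_lambda ` (Pi\<^sub>E UNIV (\<lambda>_. {-L..L}))" by blast
  qed
  moreover have "finite (vec_lambda ` (Pi\<^sub>E UNIV (\<lambda>_. {-L..L})))"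
    by (intro finite_imageI finite_PiE) auto
  ultimately show ?thesis by (rule finite_subset)
qed

lemma kap_sets: "{v::real^'p. kap n v = k} \<in> sets borel"
proof -
  have "{v. kap n v = k} = (\<Inter>i. {v::real^'p. real_of_int (k$i) \<le> 2^n * v$i \<and> 2^n * v$i < real_of_int (k$i) + 1})"
    by (auto simp: kap_def vec_eq_iff floor_eq_iff)
  also have "\<dots> \<in> sets borel" by measurable
  finally show ?thesis .
qed

context
  fixes \<pi>0 :: "(real^'p) measure" and \<Omega> :: "(real^'p) set"
    and w :: "nat \<Rightarrow> real^'p" and a :: "nat \<Rightarrow> real" and C :: real
  assumes P: "prob_space \<pi>0" and S: "sets \<pi>0 = sets borel" and cpt: "compact \<Omega>"
    and AE\<Omega>: "AE v in \<pi>0. v \<in> \<Omega>"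
    and w\<Omega>: "\<And>j. j \<ge> 1 \<Longrightarrow> w j \<in> \<Omega>" and ab: "\<And>j. j \<ge> 1 \<Longrightarrow> \<bar>a j\<bar> \<le> C"
    and freq: "\<And>n k. (\<lambda>m. (1/real m) * (\<Sum>j=1..m. indicator {v\<in>\<Omega>. kap n v = k} (w j)))
                 \<longlonglongrightarrow> measure \<pi>0 {v\<in>\<Omega>. kap n v = k}"
begin

definition "cell n k = {v\<in>\<Omega>. kap n v = k}"
definition "KK n = kap n ` \<Omega>"
definition "pc n k = measure \<pi>0 (cell n k)"
definition "num n k m = (1/real m) * (\<Sum>j=1..m. a j * indicator (cell n k) (w j))"
definition "fr n k m = (1/real m) * (\<Sum>j=1..m. indicator (cell n k) (w j) :: real)"
definition "rr = (SOME r. strict_mono r \<and> (\<forall>nk. \<exists>l. (\<lambda>m. num (fst nk) (snd nk) (r m)) \<longlonglongrightarrow> l))"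
definition "nu n k = lim (\<lambda>m. num n k (rr m))"
definition "dens n v = (\<Sum>k\<in>KK n. (nu n k / pc n k) * indicator (cell n k) v)"
definition "Ee n = (\<Sum>k\<in>KK n. (nu n k / pc n k) * nu n k)"
definition "DD n n' k = {k'\<in>KK n'. \<exists>u\<in>\<Omega>. kap n' u = k' \<and> kap n u = k}"

lemma C_nonneg: "0 \<le> C" using ab[of 1] by simp

lemma sp: "space \<pi>0 = UNIV" using sets_eq_imp_space_eq[OF S] by simp

lemma meas_cong: "borel_measurable \<pi>0 = borel_measurable borel"
  by (rule measurable_cong_sets[OF S refl])

lemma Omega_sets: "\<Omega> \<in> sets \<pi>0"
  using S cpt by (simp add: compact_imp_closed)

lemma cell_sets: "cell n k \<in> sets \<pi>0"
proof -
  have "cell n k = \<Omega> \<inter> {v. kap n v = k}" by (auto simp: cell_def)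
  then show ?thesis using Omega_sets kap_sets[of n k] S by auto
qed

lemma KK_fin: "finite (KK n)"
  unfolding KK_def by (rule kap_finite[OF compact_imp_bounded[OF cpt]])

lemma avg_aux: "0 \<le> S \<Longrightarrow> S \<le> real m \<Longrightarrow> 0 \<le> (1/real m) * S \<and> (1/real m) * S \<le> 1"
  by (cases "m = 0") (auto simp: field_simps)

lemma fr_bound: "0 \<le> fr n k m" "fr n k m \<le> 1"
proof -
  have "(\<Sum>j=1..m. indicator (cell n k) (w j) :: real) \<le> (\<Sum>j=1..m. 1)"
    by (intro sum_mono) (auto simp: indicator_def)
  moreover have "0 \<le> (\<Sum>j=1..m. indicator (cell n k) (w j) :: real)" by (intro sum_nonneg) auto
  ultimately show "0 \<le> fr n k m" "fr n k m \<le> 1"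
    unfolding fr_def using avg_aux by auto
qed

lemma num_bound: "\<bar>num n k m\<bar> \<le> C * fr n k m"
proof -
  have A: "\<bar>\<Sum>j=1..m. a j * indicator (cell n k) (w j)\<bar> \<le> (\<Sum>j=1..m. C * indicator (cell n k) (w j))"
  proof -
    have "\<bar>\<Sum>j=1..m. a j * indicator (cell n k) (w j)\<bar> \<le> (\<Sum>j=1..m. \<bar>a j * indicator (cell n k) (w j)\<bar>)"
      by (rule sum_abs)
    also have "\<dots> \<le> (\<Sum>j=1..m. C * indicator (cell n k) (w j))"
      by (intro sum_mono) (auto simp: indicator_def abs_mult intro: ab)
    finally show ?thesis .
  qed
  have "\<bar>num n k m\<bar> = (1/real m) * \<bar>\<Sum>j=1..m. a j * indicator (cell n k) (w j)\<bar>"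
    by (simp only: num_def abs_mult abs_divide abs_one abs_of_nat)
  also have "\<dots> \<le> (1/real m) * (\<Sum>j=1..m. C * indicator (cell n k) (w j))"
    by (rule mult_left_mono[OF A]) simp
  also have "\<dots> = C * fr n k m"
    unfolding fr_def sum_distrib_left[symmetric] by (rule mult.left_commute)
  finally show ?thesis .
qed

lemma num_bound': "\<bar>num n k m\<bar> \<le> C"
  using num_bound[of n k m] fr_bound[of n k m] C_nonneg
  by (meson dual_order.trans mult_left_le)

lemma rr_props: "strict_mono rr" "(\<lambda>m. num n k (rr m)) \<longlonglongrightarrow> nu n k"
proof -
  define u where "u i m = num (fst (from_nat i :: nat \<times> (int^'p))) (snd (from_nat i :: nat \<times> (int^'p))) m" for i m
  have "\<exists>r. strict_mono r \<and> (\<forall>i. \<exists>l. (\<lambda>m. u i (r m)) \<longlonglongrightarrow> l)"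
    by (rule diagonal_conv[of u C]) (simp add: u_def num_bound')
  then obtain r where r: "strict_mono r" "\<And>i. \<exists>l. (\<lambda>m. u i (r m)) \<longlonglongrightarrow> l" by blast
  have "\<forall>nk. \<exists>l. (\<lambda>m. num (fst nk) (snd nk) (r m)) \<longlonglongrightarrow> l"
  proof
    fix nk :: "nat \<times> (int^'p)"
    show "\<exists>l. (\<lambda>m. num (fst nk) (snd nk) (r m)) \<longlonglongrightarrow> l"
      using r(2)[of "to_nat nk"] by (simp add: u_def)
  qed
  with r(1) have ex: "\<exists>r. strict_mono r \<and> (\<forall>nk. \<exists>l. (\<lambda>m. num (fst nk) (snd nk) (r m)) \<longlonglongrightarrow> l)" by blast
  have rr: "strict_mono rr \<and> (\<forall>nk. \<exists>l. (\<lambda>m. num (fst nk) (snd nk) (rr m)) \<longlonglongrightarrow> l)"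
    unfolding rr_def by (rule someI_ex[OF ex])
  then show "strict_mono rr" by simp
  from rr have "\<exists>l. (\<lambda>m. num n k (rr m)) \<longlonglongrightarrow> l" by (metis fst_conv snd_conv)
  then show "(\<lambda>m. num n k (rr m)) \<longlonglongrightarrow> nu n k"
    unfolding nu_def by (metis convergentI convergent_LIMSEQ_iff)
qed

lemma nu_bound: "\<bar>nu n k\<bar> \<le> C * pc n k"
proof -
  have f: "(\<lambda>m. fr n k (rr m)) \<longlonglongrightarrow> pc n k"
    using LIMSEQ_subseq_LIMSEQ[OF freq[of n k] rr_props(1)]
    by (simp add: o_def fr_def pc_def cell_def)
  have "(\<lambda>m. \<bar>num n k (rr m)\<bar>) \<longlonglongrightarrow> \<bar>nu n k\<bar>" by (intro tendsto_rabs rr_props)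
  moreover have "(\<lambda>m. C * fr n k (rr m)) \<longlonglongrightarrow> C * pc n k" by (intro tendsto_mult_left f)
  ultimately show ?thesis by (rule LIMSEQ_le) (auto intro: num_bound)
qed

lemma pc_nonneg: "0 \<le> pc n k" by (simp add: pc_def)

lemma nu_div: "(nu n k / pc n k) * pc n k = nu n k"
proof (cases "pc n k = 0")
  case True
  then show ?thesis using nu_bound[of n k] by simp
qed simp

lemma nu_div_bound: "\<bar>nu n k / pc n k\<bar> \<le> C"
proof (cases "pc n k = 0")
  case True then show ?thesis using C_nonneg by simp
next
  case False
  then have "pc n k > 0" using pc_nonneg[of n k] by simp
  then have pos: "pc n k > 0" .
  show ?thesis
    by (simp only: abs_div_pos[OF pos, symmetric] pos_divide_le_eq[OF pos]) (simp add: nu_bound mult.commute)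
qed

lemma DD_sub: "DD n n' k \<subseteq> KK n'" by (auto simp: DD_def)
lemma DD_fin: "finite (DD n n' k)" using finite_subset[OF DD_sub KK_fin] .

lemma ind_cell: "indicator (cell n k) v = (if v \<in> \<Omega> \<and> kap n v = k then 1 else (0::real))"
  by (simp add: cell_def indicator_def)

lemma DD_mem:
  assumes "n \<le> n'" "v \<in> \<Omega>"
  shows "kap n' v \<in> DD n n' k \<longleftrightarrow> kap n v = k"
proof
  assume "kap n' v \<in> DD n n' k"
  then obtain u where "u \<in> \<Omega>" "kap n' u = kap n' v" "kap n u = k" by (auto simp: DD_def)
  then show "kap n v = k" using kap_refine[OF assms(1), of u v] by simp
next
  assume "kap n v = k"
  then show "kap n' v \<in> DD n n' k" using assms(2) by (auto simp: DD_def KK_def)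
qed

lemma ind_partition:
  assumes "n \<le> n'"
  shows "indicator (cell n k) v = (\<Sum>k'\<in>DD n n' k. indicator (cell n' k') v :: real)"
proof (cases "v \<in> \<Omega>")
  case False then show ?thesis by (simp add: ind_cell)
next
  case True
  have "(\<Sum>k'\<in>DD n n' k. indicator (cell n' k') v :: real) = (\<Sum>k'\<in>DD n n' k. if kap n' v = k' then 1 else 0)"
    by (intro sum.cong) (auto simp: ind_cell True)
  also have "\<dots> = (if kap n' v \<in> DD n n' k then 1 else 0)"
    using DD_fin by (simp add: sum.delta)
  also have "\<dots> = indicator (cell n k) v"
    using True DD_mem[OF assms True] by (simp add: ind_cell)
  finally show ?thesis ..
qed

lemma ind_prod:
  assumes "n0 \<le> n"
  shows "indicator (cell n k) v * indicator (cell n0 k0) v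
    = (if k \<in> DD n0 n k0 then indicator (cell n k) v else (0::real))"
proof (cases "v \<in> \<Omega> \<and> kap n v = k")
  case True
  then have "k \<in> DD n0 n k0 \<longleftrightarrow> kap n0 v = k0" using DD_mem[OF assms, of v k0] by auto
  then show ?thesis using True by (simp add: ind_cell)
next
  case False
  then show ?thesis by (auto simp: ind_cell)
qed

lemma num_partition:
  assumes "n \<le> n'"
  shows "num n k m = (\<Sum>k'\<in>DD n n' k. num n' k' m)"
  unfolding num_def ind_partition[OF assms]
  by (simp add: sum_distrib_left sum_distrib_right sum.swap[of _ "DD n n' k"])

lemma nu_partition:
  assumes "n \<le> n'"
  shows "nu n k = (\<Sum>k'\<in>DD n n' k. nu n' k')"
proof -
  have "(\<lambda>m. num n k (rr m)) \<longlonglongrightarrow> (\<Sum>k'\<in>DD n n' k. nu n' k')"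
    unfolding num_partition[OF assms] by (intro tendsto_sum rr_props)
  then show ?thesis using rr_props(2) LIMSEQ_unique by blast
qed

lemma dens_meas[measurable]: "dens n \<in> borel_measurable \<pi>0"
  unfolding dens_def using cell_sets by measurable

lemma dens_pt: "dens n v = (if v \<in> \<Omega> then nu n (kap n v) / pc n (kap n v) else 0)"
proof (cases "v \<in> \<Omega>")
  case True
  have "dens n v = (\<Sum>k\<in>KK n. if kap n v = k then nu n k / pc n k else 0)"
    unfolding dens_def by (intro sum.cong) (auto simp: ind_cell True)
  also have "\<dots> = nu n (kap n v) / pc n (kap n v)"
    using KK_fin True by (simp add: sum.delta KK_def)
  finally show ?thesis using True by simp
qed (simp add: dens_def ind_cell)

lemma dens_bound: "\<bar>dens n v\<bar> \<le> C"
  using nu_div_bound C_nonneg by (simp add: dens_pt)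

interpretation prob_space \<pi>0 by (rule P)

lemma dens_int: "integrable \<pi>0 (dens n)"
  by (rule integrable_const_bound[where B=C]) (auto simp: dens_bound)

lemma bounded_int:
  fixes f :: "real^'p \<Rightarrow> real"
  assumes "f \<in> borel_measurable \<pi>0" "\<And>v. \<bar>f v\<bar> \<le> B"
  shows "integrable \<pi>0 f"
  using assms by (intro integrable_const_bound[where B=B]) auto

lemma int_cell: "integral\<^sup>L \<pi>0 (indicator (cell n k)) = pc n k"
  by (simp add: pc_def sp)

lemma int_sum_const:
  fixes g :: "'k \<Rightarrow> real^'p \<Rightarrow> real" and A :: "'k set" and c :: "'k \<Rightarrow> real"
  assumes "\<And>k. integrable \<pi>0 (g k)"
  shows "(\<integral>v. (\<Sum>k\<in>A. c k * g k v) \<partial>\<pi>0) = (\<Sum>k\<in>A. c k * integral\<^sup>L \<pi>0 (g k))"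
proof -
  have "(\<integral>v. (\<Sum>k\<in>A. c k * g k v) \<partial>\<pi>0) = (\<Sum>k\<in>A. \<integral>v. c k * g k v \<partial>\<pi>0)"
    by (rule Bochner_Integration.integral_sum) (intro integrable_mult_right assms)
  then show ?thesis by (simp only: integral_mult_right_zero)
qed

lemma ind_int: "integrable \<pi>0 (indicator (cell n k) :: _ \<Rightarrow> real)"
  by (rule bounded_int[where B=1]) (use cell_sets in \<open>auto simp: indicator_def\<close>)

lemma ind_dens_int: "integrable \<pi>0 (\<lambda>v. indicator (cell n0 k0) v * dens n v)"
  by (rule bounded_int[where B=C]) (use cell_sets dens_bound C_nonneg in \<open>auto simp: indicator_def\<close>)

lemma key:
  assumes "n0 \<le> n"
  shows "(\<integral>v. dens n v * indicator (cell n0 k0) v \<partial>\<pi>0) = nu n0 k0"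
proof -
  have "(\<lambda>v. dens n v * indicator (cell n0 k0) v)
      = (\<lambda>v. \<Sum>k\<in>DD n0 n k0. (nu n k / pc n k) * indicator (cell n k) v)"
  proof
    fix v
    have "dens n v * indicator (cell n0 k0) v
        = (\<Sum>k\<in>KK n. (nu n k / pc n k) * (indicator (cell n k) v * indicator (cell n0 k0) v))"
      unfolding dens_def by (simp add: sum_distrib_right mult.assoc)
    also have "\<dots> = (\<Sum>k\<in>KK n. if k \<in> DD n0 n k0 then (nu n k / pc n k) * indicator (cell n k) v else 0)"
      by (intro sum.cong) (auto simp: ind_prod[OF assms])
    also have "\<dots> = (\<Sum>k\<in>KK n \<inter> DD n0 n k0. (nu n k / pc n k) * indicator (cell n k) v)"
      by (subst sum.inter_restrict[OF KK_fin]) (rule refl)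
    also have "KK n \<inter> DD n0 n k0 = DD n0 n k0" using DD_sub by blast
    finally show "dens n v * indicator (cell n0 k0) v
      = (\<Sum>k\<in>DD n0 n k0. (nu n k / pc n k) * indicator (cell n k) v)" .
  qed
  then have "(\<integral>v. dens n v * indicator (cell n0 k0) v \<partial>\<pi>0)
      = (\<Sum>k\<in>DD n0 n k0. (nu n k / pc n k) * integral\<^sup>L \<pi>0 (indicator (cell n k)))"
    using int_sum_const[where g="\<lambda>k. indicator (cell n k)" and A="DD n0 n k0" and c="\<lambda>k. nu n k / pc n k", OF ind_int] by simp
  also have "\<dots> = (\<Sum>k\<in>DD n0 n k0. (nu n k / pc n k) * pc n k)" by (simp only: int_cell)
  also have "\<dots> = (\<Sum>k\<in>DD n0 n k0. nu n k)" by (simp only: nu_div)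
  also have "\<dots> = nu n0 k0" using nu_partition[OF assms] by simp
  finally show ?thesis .
qed

lemma key':
  assumes "n0 \<le> n"
  shows "(\<integral>v. indicator (cell n0 k0) v * dens n v \<partial>\<pi>0) = nu n0 k0"
  using key[OF assms, of k0] by (simp add: mult.commute)

lemma cross:
  assumes "n0 \<le> n"
  shows "(\<integral>v. dens n0 v * dens n v \<partial>\<pi>0) = Ee n0"
proof -
  have "(\<lambda>v. dens n0 v * dens n v) = (\<lambda>v. \<Sum>k0\<in>KK n0. (nu n0 k0 / pc n0 k0) * (indicator (cell n0 k0) v * dens n v))"
    by (simp only: dens_def[of n0] sum_distrib_right mult.assoc)
  then have "(\<integral>v. dens n0 v * dens n v \<partial>\<pi>0) = (\<Sum>k0\<in>KK n0. (nu n0 k0 / pc n0 k0) * (\<integral>v. indicator (cell n0 k0) v * dens n v \<partial>\<pi>0))"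
    using int_sum_const[where g="\<lambda>k0 v. indicator (cell n0 k0) v * dens n v" and A="KK n0" and c="\<lambda>k0. nu n0 k0 / pc n0 k0", OF ind_dens_int] by simp
  also have "\<dots> = Ee n0" by (simp add: key'[OF assms] Ee_def)
  finally show ?thesis .
qed

lemma dens_prod_int: "integrable \<pi>0 (\<lambda>v. dens n v * dens n' v)"
proof (rule bounded_int[where B="C * C"])
  show "\<bar>dens n v * dens n' v\<bar> \<le> C * C" for v
    unfolding abs_mult by (intro mult_mono dens_bound) (auto simp: C_nonneg)
qed simp

lemma sq_int:
  assumes "n0 \<le> n"
  shows "(\<integral>v. (dens n v - dens n0 v)^2 \<partial>\<pi>0) = Ee n - Ee n0"
proof -
  have "(\<lambda>v. (dens n v - dens n0 v)^2) = (\<lambda>v. dens n v * dens n v - 2 * (dens n0 v * dens n v) + dens n0 v * dens n0 v)"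
    by (auto simp: power2_eq_square algebra_simps)
  then have "(\<integral>v. (dens n v - dens n0 v)^2 \<partial>\<pi>0)
      = (\<integral>v. dens n v * dens n v \<partial>\<pi>0) - 2 * (\<integral>v. dens n0 v * dens n v \<partial>\<pi>0) + (\<integral>v. dens n0 v * dens n0 v \<partial>\<pi>0)"
    using dens_prod_int by simp
  also have "\<dots> = Ee n - Ee n0" using cross[OF assms] cross[of n n] cross[of n0 n0] by simp
  finally show ?thesis .
qed

lemma sq_int_abs: "(\<integral>v. (dens n v - dens n' v)^2 \<partial>\<pi>0) = \<bar>Ee n - Ee n'\<bar>"
proof (cases "n' \<le> n")
  case True
  have "0 \<le> (\<integral>v. (dens n v - dens n' v)^2 \<partial>\<pi>0)" by (intro Bochner_Integration.integral_nonneg) auto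
  then show ?thesis using sq_int[OF True] by simp
next
  case False
  then have F: "n \<le> n'" by simp
  have e: "(\<lambda>v. (dens n v - dens n' v)^2) = (\<lambda>v. (dens n' v - dens n v)^2)"
    by (auto simp: power2_commute)
  have "0 \<le> (\<integral>v. (dens n' v - dens n v)^2 \<partial>\<pi>0)" by (intro Bochner_Integration.integral_nonneg) auto
  then show ?thesis using sq_int[OF F] by (simp add: e)
qed

lemma Ee_mono: "incseq Ee"
proof (rule incseq_SucI)
  fix n
  have "0 \<le> (\<integral>v. (dens (Suc n) v - dens n v)^2 \<partial>\<pi>0)" by (intro Bochner_Integration.integral_nonneg) auto
  then show "Ee n \<le> Ee (Suc n)" using sq_int[of n "Suc n"] by simp
qed

lemma Ee_bound: "Ee n \<le> C * C"
proof -
  have "Ee n = (\<integral>v. dens n v * dens n v \<partial>\<pi>0)" using cross[of n n] by simp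
  also have "\<dots> \<le> (\<integral>v. C * C \<partial>\<pi>0)"
  proof (rule integral_mono)
    show "integrable \<pi>0 (\<lambda>v. dens n v * dens n v)" by (rule dens_prod_int)
    show "dens n v * dens n v \<le> C * C" for v
    proof -
      have "dens n v * dens n v = \<bar>dens n v\<bar> * \<bar>dens n v\<bar>" by (simp add: abs_mult_self_eq)
      also have "\<dots> \<le> C * C" by (intro mult_mono dens_bound) (auto simp: C_nonneg)
      finally show ?thesis .
    qed
  qed simp
  also have "\<dots> = C * C" by (simp add: prob_space.prob_space[OF P])
  finally show ?thesis .
qed

lemma Ee_Cauchy: "Cauchy Ee"
proof -
  have "Ee \<longlonglongrightarrow> (SUP i. Ee i)"
    by (rule LIMSEQ_incseq_SUP[OF _ Ee_mono]) (rule bdd_aboveI2[where M="C*C"], rule Ee_bound)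
  then show ?thesis by (rule LIMSEQ_imp_Cauchy)
qed

lemma amgm: "\<bar>x\<bar> \<le> x^2 / e + e / 4" if "e > 0" for x e :: real
proof -
  have "0 \<le> (\<bar>x\<bar> - e/2)^2" by simp
  then have "e * \<bar>x\<bar> \<le> x^2 + e^2/4" by (simp add: power2_eq_square algebra_simps)
  then show ?thesis using that by (simp add: field_simps power2_eq_square)
qed

lemma dens_L1_Cauchy:
  assumes "e > 0"
  shows "\<exists>N. \<forall>i\<ge>N. \<forall>j\<ge>N. (LINT v|\<pi>0. norm (dens i v - dens j v)) < e"
proof -
  have "e * e / 4 > 0" using assms by simp
  then obtain N where N: "\<And>i j. i \<ge> N \<Longrightarrow> j \<ge> N \<Longrightarrow> dist (Ee i) (Ee j) < e * e / 4"
    using Ee_Cauchy unfolding Cauchy_def by blast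
  have "(LINT v|\<pi>0. norm (dens i v - dens j v)) < e" if "i \<ge> N" "j \<ge> N" for i j
  proof -
    have "(LINT v|\<pi>0. norm (dens i v - dens j v)) \<le> (LINT v|\<pi>0. (dens i v - dens j v)^2 / e + e / 4)"
    proof (rule integral_mono)
      show "integrable \<pi>0 (\<lambda>v. norm (dens i v - dens j v))"
      proof (rule bounded_int[where B="2*C"])
        show "\<bar>norm (dens i v - dens j v)\<bar> \<le> 2 * C" for v
          using abs_triangle_ineq4[of "dens i v" "dens j v"] dens_bound[of i v] dens_bound[of j v] by simp
      qed simp
      have "integrable \<pi>0 (\<lambda>v. (dens i v - dens j v)^2)"
        unfolding power2_eq_square right_diff_distrib left_diff_distrib
        by (intro Bochner_Integration.integrable_diff dens_prod_int)
      then show "integrable \<pi>0 (\<lambda>v. (dens i v - dens j v)^2 / e + e / 4)" by simp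
      show "norm (dens i v - dens j v) \<le> (dens i v - dens j v)^2 / e + e / 4" for v
        using amgm[OF assms] by simp
    qed
    also have "\<dots> = (LINT v|\<pi>0. (dens i v - dens j v)^2) / e + e / 4"
    proof -
      have "integrable \<pi>0 (\<lambda>v. (dens i v - dens j v)^2)"
        unfolding power2_eq_square right_diff_distrib left_diff_distrib
        by (intro Bochner_Integration.integrable_diff dens_prod_int)
      then show ?thesis by (simp add: prob_space.prob_space[OF P])
    qed
    also have "\<dots> = \<bar>Ee i - Ee j\<bar> / e + e / 4" by (simp add: sq_int_abs)
    also have "\<dots> < (e * e / 4) / e + e / 4"
    proof -
      have "\<bar>Ee i - Ee j\<bar> / e < (e * e / 4) / e"
        using N[OF that] assms by (intro divide_strict_right_mono) (auto simp: dist_real_def)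
      then show ?thesis by linarith
    qed
    also have "\<dots> < e" using assms by simp
    finally show ?thesis .
  qed
  then show ?thesis by blast
qed

definition "rr2 = (SOME r. strict_mono r \<and> (AE v in \<pi>0. Cauchy (\<lambda>i. dens (r i) v)))"

lemma rr2_props: "strict_mono rr2" "AE v in \<pi>0. Cauchy (\<lambda>i. dens (rr2 i) v)"
proof -
  obtain r where "strict_mono r" "AE v in \<pi>0. Cauchy (\<lambda>i. dens (r i) v)"
    by (rule cauchy_L1_AE_cauchy_subseq[OF dens_int dens_L1_Cauchy]) auto
  then have "\<exists>r. strict_mono r \<and> (AE v in \<pi>0. Cauchy (\<lambda>i. dens (r i) v))" by blast
  from someI_ex[OF this] show "strict_mono rr2" "AE v in \<pi>0. Cauchy (\<lambda>i. dens (rr2 i) v)"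
    unfolding rr2_def by auto
qed

definition "astar v = lim (\<lambda>i. dens (rr2 i) v)"

lemma astar_meas[measurable]: "astar \<in> borel_measurable \<pi>0"
  unfolding astar_def by measurable

lemma astar_lim: "AE v in \<pi>0. (\<lambda>i. dens (rr2 i) v) \<longlonglongrightarrow> astar v"
  using rr2_props(2) by eventually_elim (simp add: astar_def Cauchy_convergent_iff convergent_LIMSEQ_iff)

lemma astar_bound: "AE v in \<pi>0. \<bar>astar v\<bar> \<le> C"
  using astar_lim
proof eventually_elim
  case (elim v)
  then have "(\<lambda>i. \<bar>dens (rr2 i) v\<bar>) \<longlonglongrightarrow> \<bar>astar v\<bar>" by (rule tendsto_rabs)
  then show ?case by (rule LIMSEQ_le_const2) (auto intro: dens_bound)
qed

lemma astar_cell: "(\<integral>v. astar v * indicator (cell n k) v \<partial>\<pi>0) = nu n k"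
proof -
  have lim: "(\<lambda>i. \<integral>v. dens (rr2 i) v * indicator (cell n k) v \<partial>\<pi>0) \<longlonglongrightarrow> (\<integral>v. astar v * indicator (cell n k) v \<partial>\<pi>0)"
  proof (rule integral_dominated_convergence[where w="\<lambda>_. C"])
    show "AE v in \<pi>0. (\<lambda>i. dens (rr2 i) v * indicator (cell n k) v) \<longlonglongrightarrow> astar v * indicator (cell n k) v"
      using astar_lim by eventually_elim (intro tendsto_mult_right)
    show "AE v in \<pi>0. norm (dens (rr2 i) v * indicator (cell n k) v) \<le> C" for i
      using dens_bound C_nonneg by (auto simp: indicator_def)
  qed (use cell_sets in auto)
  have "eventually (\<lambda>i. (\<integral>v. dens (rr2 i) v * indicator (cell n k) v \<partial>\<pi>0) = nu n k) sequentially"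
  proof (rule eventually_sequentiallyI[of n])
    fix i assume "n \<le> i"
    then have "n \<le> rr2 i" using seq_suble[OF rr2_props(1), of i] by simp
    then show "(\<integral>v. dens (rr2 i) v * indicator (cell n k) v \<partial>\<pi>0) = nu n k" by (rule key)
  qed
  then have "eventually (\<lambda>i. nu n k = (\<integral>v. dens (rr2 i) v * indicator (cell n k) v \<partial>\<pi>0)) sequentially"
    by (simp add: eq_commute)
  from Lim_transform_eventually[OF tendsto_const this]
  have "(\<lambda>i. \<integral>v. dens (rr2 i) v * indicator (cell n k) v \<partial>\<pi>0) \<longlonglongrightarrow> nu n k" .
  then show ?thesis using lim LIMSEQ_unique by blast
qed

lemma final_bound:
  assumes hc: "continuous_on \<Omega> h"
    and lim: "(\<lambda>m. (1 / real m) * (\<Sum>j=1..m. a j * h (w j))) \<longlonglongrightarrow> L"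
    and e: "\<epsilon> > 0"
  shows "\<bar>L - (\<integral>v. indicator \<Omega> v * (astar v * h v) \<partial>\<pi>0)\<bar> \<le> 2 * C * \<epsilon>"
proof -
  obtain Bh where Bh: "\<And>v. v \<in> \<Omega> \<Longrightarrow> \<bar>h v\<bar> \<le> Bh"
    using compact_imp_bounded[OF compact_continuous_image[OF hc cpt]] by (auto simp: bounded_iff)
  have "uniformly_continuous_on \<Omega> h" by (rule compact_uniformly_continuous[OF hc cpt])
  then obtain \<delta> where \<delta>: "\<delta> > 0" "\<And>x x'. x \<in> \<Omega> \<Longrightarrow> x' \<in> \<Omega> \<Longrightarrow> dist x' x < \<delta> \<Longrightarrow> dist (h x') (h x) < \<epsilon>"
    unfolding uniformly_continuous_on_def using e by metis
  obtain n where n: "real CARD('p) / \<delta> < 2^n" using real_arch_pow[of 2 "real CARD('p) / \<delta>"] by auto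
  then have nd: "real CARD('p) / 2^n < \<delta>" using \<delta>(1) by (simp add: field_simps)
  define rep where "rep k = (SOME v. v \<in> \<Omega> \<and> kap n v = k)" for k
  have rep: "rep k \<in> \<Omega> \<and> kap n (rep k) = k" if "k \<in> KK n" for k
  proof -
    from that have "\<exists>v. v \<in> \<Omega> \<and> kap n v = k" by (auto simp: KK_def)
    then show ?thesis unfolding rep_def by (rule someI_ex)
  qed
  define s where "s v = (\<Sum>k\<in>KK n. h (rep k) * indicator (cell n k) v)" for v
  have s_pt: "s v = (if v \<in> \<Omega> then h (rep (kap n v)) else 0)" for v
  proof (cases "v \<in> \<Omega>")
    case True
    have "s v = (\<Sum>k\<in>KK n. if kap n v = k then h (rep k) else 0)"
      unfolding s_def by (intro sum.cong) (auto simp: ind_cell True)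
    also have "\<dots> = h (rep (kap n v))" using KK_fin True by (simp add: KK_def)
    finally show ?thesis using True by simp
  qed (simp add: s_def ind_cell)
  have close: "\<bar>h v - s v\<bar> \<le> \<epsilon>" if "v \<in> \<Omega>" for v
  proof -
    have k: "kap n v \<in> KK n" using that by (simp add: KK_def)
    have "dist (rep (kap n v)) v \<le> real CARD('p) / 2^n"
      using rep[OF k] by (intro kap_diam) simp
    then have "dist (h (rep (kap n v))) (h v) < \<epsilon>" using \<delta>(2)[OF that] rep[OF k] nd by simp
    then show ?thesis using that by (simp add: s_pt dist_real_def abs_minus_commute)
  qed
  have close': "\<bar>s v - indicator \<Omega> v * h v\<bar> \<le> \<epsilon>" for v
    using close[of v] e by (cases "v \<in> \<Omega>") (auto simp: s_pt abs_minus_commute)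
  have s_meas[measurable]: "s \<in> borel_measurable \<pi>0"
    unfolding s_def using cell_sets by measurable
  have s_bound: "\<bar>s v\<bar> \<le> \<bar>Bh\<bar>" for v
    using Bh rep by (auto simp: s_pt KK_def intro: order.trans[OF _ abs_ge_self])
  define T where "T m = (1 / real m) * (\<Sum>j=1..m. a j * s (w j))" for m
  have T_eq: "T m = (\<Sum>k\<in>KK n. h (rep k) * num n k m)" for m
  proof -
    have "T m = (1/real m) * (\<Sum>j=1..m. \<Sum>k\<in>KK n. a j * (h (rep k) * indicator (cell n k) (w j)))"
      unfolding T_def s_def by (simp only: sum_distrib_left)
    also have "\<dots> = (1/real m) * (\<Sum>k\<in>KK n. \<Sum>j=1..m. a j * (h (rep k) * indicator (cell n k) (w j)))"
      by (rule arg_cong[where f="\<lambda>x. (1/real m) * x"], rule sum.swap)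
    also have "\<dots> = (\<Sum>k\<in>KK n. h (rep k) * num n k m)"
      unfolding num_def by (simp only: sum_distrib_left mult.left_commute)
    finally show ?thesis .
  qed
  have astar_int: "integrable \<pi>0 (\<lambda>v. astar v * indicator (cell n k) v)" for k
    by (rule integrable_const_bound[where B=C]) (use astar_bound cell_sets C_nonneg in \<open>auto simp: indicator_def\<close>)
  have int_as: "(\<integral>v. astar v * s v \<partial>\<pi>0) = (\<Sum>k\<in>KK n. h (rep k) * nu n k)"
  proof -
    have "(\<lambda>v. astar v * s v) = (\<lambda>v. \<Sum>k\<in>KK n. h (rep k) * (astar v * indicator (cell n k) v))"
      unfolding s_def by (auto simp: sum_distrib_left mult_ac)
    then show ?thesis
      using int_sum_const[where g="\<lambda>k v. astar v * indicator (cell n k) v" and A="KK n" and c="\<lambda>k. h (rep k)", OF astar_int]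
      by (simp add: astar_cell)
  qed
  have Tlim: "(\<lambda>m. T (rr m)) \<longlonglongrightarrow> (\<integral>v. astar v * s v \<partial>\<pi>0)"
    unfolding T_eq int_as by (intro tendsto_sum tendsto_mult_left rr_props)
  have d1: "\<bar>(1 / real m) * (\<Sum>j=1..m. a j * h (w j)) - T m\<bar> \<le> C * \<epsilon>" for m
  proof -
    have "\<bar>\<Sum>j=1..m. a j * (h (w j) - s (w j))\<bar> \<le> (\<Sum>j=1..m. \<bar>a j * (h (w j) - s (w j))\<bar>)"
      by (rule sum_abs)
    also have "\<dots> \<le> (\<Sum>j=1..m. C * \<epsilon>)"
    proof (intro sum_mono)
      fix j assume "j \<in> {1..m}"
      then have j: "j \<ge> 1" by simp
      show "\<bar>a j * (h (w j) - s (w j))\<bar> \<le> C * \<epsilon>"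
        unfolding abs_mult using ab[OF j] close[OF w\<Omega>[OF j]] C_nonneg
        by (intro mult_mono) auto
    qed
    also have "\<dots> = real m * (C * \<epsilon>)" by simp
    finally have A: "\<bar>\<Sum>j=1..m. a j * (h (w j) - s (w j))\<bar> \<le> real m * (C * \<epsilon>)" .
    have "(1 / real m) * (\<Sum>j=1..m. a j * h (w j)) - T m = (1 / real m) * (\<Sum>j=1..m. a j * (h (w j) - s (w j)))"
      unfolding T_def by (simp add: right_diff_distrib sum_subtractf)
    also have "\<bar>\<dots>\<bar> \<le> C * \<epsilon>"
    proof (cases "m = 0")
      case True then show ?thesis using C_nonneg e by simp
    next
      case False
      then show ?thesis using A by (simp add: abs_mult field_simps)
    qed
    finally show ?thesis .
  qed
  have lim_r: "(\<lambda>m. (1 / real (rr m)) * (\<Sum>j=1..rr m. a j * h (w j))) \<longlonglongrightarrow> L"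
    using LIMSEQ_subseq_LIMSEQ[OF lim rr_props(1)] by (simp add: o_def)
  have b1: "\<bar>L - (\<integral>v. astar v * s v \<partial>\<pi>0)\<bar> \<le> C * \<epsilon>"
  proof (rule LIMSEQ_le_const2)
    show "(\<lambda>m. \<bar>(1 / real (rr m)) * (\<Sum>j=1..rr m. a j * h (w j)) - T (rr m)\<bar>) \<longlonglongrightarrow> \<bar>L - (\<integral>v. astar v * s v \<partial>\<pi>0)\<bar>"
      by (intro tendsto_rabs tendsto_diff lim_r Tlim)
  qed (use d1 in auto)
  have hm: "(\<lambda>v. indicator \<Omega> v * h v) \<in> borel_measurable \<pi>0"
    using borel_measurable_continuous_on_indicator[OF _ hc] Omega_sets S by (simp add: meas_cong)
  have int1: "integrable \<pi>0 (\<lambda>v. astar v * s v)"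
    by (rule integrable_const_bound[where B="C * \<bar>Bh\<bar>"])
       (use astar_bound in \<open>auto simp: abs_mult intro!: mult_mono s_bound\<close>)
  have int2: "integrable \<pi>0 (\<lambda>v. indicator \<Omega> v * (astar v * h v))"
  proof (rule integrable_const_bound[where B="C * \<bar>Bh\<bar>"])
    show "AE v in \<pi>0. norm (indicator \<Omega> v * (astar v * h v)) \<le> C * \<bar>Bh\<bar>"
      using astar_bound
    proof eventually_elim
      case (elim v)
      show ?case
      proof (cases "v \<in> \<Omega>")
        case True
        then have "\<bar>h v\<bar> \<le> \<bar>Bh\<bar>" using Bh[OF True] by simp
        then show ?thesis using True elim by (simp add: abs_mult mult_mono)
      qed (simp add: C_nonneg)
    qed
    have "(\<lambda>v. astar v * (indicator \<Omega> v * h v)) \<in> borel_measurable \<pi>0" using hm by measurable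
    then show "(\<lambda>v. indicator \<Omega> v * (astar v * h v)) \<in> borel_measurable \<pi>0" by (simp add: mult_ac)
  qed
  have b2: "\<bar>(\<integral>v. astar v * s v \<partial>\<pi>0) - (\<integral>v. indicator \<Omega> v * (astar v * h v) \<partial>\<pi>0)\<bar> \<le> C * \<epsilon>"
  proof -
    have "(\<integral>v. astar v * s v \<partial>\<pi>0) - (\<integral>v. indicator \<Omega> v * (astar v * h v) \<partial>\<pi>0)
        = (\<integral>v. astar v * s v - indicator \<Omega> v * (astar v * h v) \<partial>\<pi>0)"
      using int1 int2 by simp
    also have "\<bar>\<dots>\<bar> \<le> (\<integral>v. \<bar>astar v * s v - indicator \<Omega> v * (astar v * h v)\<bar> \<partial>\<pi>0)"
      by (rule integral_abs_bound)
    also have "\<dots> \<le> (\<integral>v. C * \<epsilon> \<partial>\<pi>0)"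
    proof (rule integral_mono_AE)
      show "integrable \<pi>0 (\<lambda>v. \<bar>astar v * s v - indicator \<Omega> v * (astar v * h v)\<bar>)"
        using int1 int2 by auto
      show "AE v in \<pi>0. \<bar>astar v * s v - indicator \<Omega> v * (astar v * h v)\<bar> \<le> C * \<epsilon>"
        using astar_bound
      proof eventually_elim
        case (elim v)
        have "astar v * s v - indicator \<Omega> v * (astar v * h v) = astar v * (s v - indicator \<Omega> v * h v)"
          by (simp add: algebra_simps)
        then show ?case using elim close'[of v] e
          by (simp add: abs_mult mult_mono)
      qed
    qed simp
    also have "\<dots> = C * \<epsilon>" by (simp add: prob_space.prob_space[OF P])
    finally show ?thesis .
  qed
  show ?thesis using b1 b2 by linarith
qed

lemma final:
  assumes hc: "continuous_on \<Omega> h"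
    and lim: "(\<lambda>m. (1 / real m) * (\<Sum>j=1..m. a j * h (w j))) \<longlonglongrightarrow> L"
  shows "L = (LINT v:\<Omega>|\<pi>0. astar v * h v)"
proof -
  define I where "I = (\<integral>v. indicator \<Omega> v * (astar v * h v) \<partial>\<pi>0)"
  have "\<bar>L - I\<bar> \<le> 0"
  proof (rule field_le_epsilon)
    fix d :: real assume d: "d > 0"
    have "\<bar>L - I\<bar> \<le> 2 * C * (d / (2 * C + 1))"
      unfolding I_def by (rule final_bound[OF hc lim]) (use d C_nonneg in simp)
    also have "\<dots> \<le> d" using d C_nonneg by (simp add: field_simps)
    finally show "\<bar>L - I\<bar> \<le> 0 + d" by simp
  qed
  then show ?thesis by (simp add: I_def set_lebesgue_integral_def)
qed

lemma exists_astar: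
  "\<exists>f. f \<in> borel_measurable \<pi>0 \<and> (AE v in \<pi>0. \<bar>f v\<bar> \<le> C) \<and>
     (\<forall>h L. continuous_on \<Omega> h \<longrightarrow> (\<lambda>m. (1 / real m) * (\<Sum>j=1..m. a j * h (w j))) \<longlonglongrightarrow> L
        \<longrightarrow> L = (LINT v:\<Omega>|\<pi>0. f v * h v))"
  using astar_meas astar_bound final by blast

end

theorem mainTheorem2:
  fixes \<Omega> :: "(real ^ 'p) set"
    and \<pi>0 :: "(real ^ 'p) measure"
    and \<phi> :: "real ^ 'd \<Rightarrow> real ^ 'p \<Rightarrow> real"
    and M :: "'s measure"
    and W :: "nat \<Rightarrow> 's \<Rightarrow> real ^ 'p"
    and fstar :: "real ^ 'd \<Rightarrow> real"
  assumes "compact \<Omega>"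
    and "prob_space \<pi>0" and "sets \<pi>0 = sets borel"
    and "measure_support \<pi>0 = \<Omega>"
    and "continuous_on (unit_cube \<times> \<Omega>) (\<lambda>(x, w). \<phi> x w)"
    and "bounded ((\<lambda>(x, w). \<phi> x w) ` (unit_cube \<times> \<Omega>))"
    and "prob_space M"
    and "\<And>j. j \<ge> 1 \<Longrightarrow> W j \<in> M \<rightarrow>\<^sub>M borel"
    and "prob_space.indep_vars M (\<lambda>_. borel) W {1..}"
    and "\<And>j. j \<ge> 1 \<Longrightarrow> distr M borel (W j) = \<pi>0"
    and "continuous_on unit_cube fstar"
  shows "AE \<omega> in M. \<forall>C (a :: nat \<Rightarrow> real).
           ((\<forall>j\<ge>1. \<bar>a j\<bar> \<le> C) \<and>
            (\<forall>x\<in>unit_cube.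
               (\<lambda>m. (1 / real m) * (\<Sum>j=1..m. a j * \<phi> x (W j \<omega>))) \<longlonglongrightarrow> fstar x))
           \<longrightarrow> (\<exists>astar. astar \<in> borel_measurable \<pi>0 \<and>
                  (AE w in \<pi>0. \<bar>astar w\<bar> \<le> C) \<and>
                  (\<forall>x\<in>unit_cube. fstar x = (LINT w:\<Omega>|\<pi>0. astar w * \<phi> x w)))
               \<and> rf_norm \<pi>0 \<Omega> \<phi> unit_cube fstar \<le> ereal C"
proof -
  note cpt = assms(1) and P = assms(2) and S = assms(3) and supp = assms(4) and phic = assms(5)
    and MP = assms(7) and Wm = assms(8) and ind = assms(9) and dist = assms(10)
  interpret M: prob_space M by (rule MP)
  have sp: "space \<pi>0 = UNIV" using sets_eq_imp_space_eq[OF S] by simp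
  have AE\<Omega>: "AE v in \<pi>0. v \<in> \<Omega>" by (rule support_AE[OF S supp])
  have Omega_b: "\<Omega> \<in> sets borel" using cpt by (simp add: compact_imp_closed)
  have G1: "AE \<omega> in M. \<forall>j. j \<ge> 1 \<longrightarrow> W j \<omega> \<in> \<Omega>"
    unfolding AE_all_countable
  proof
    fix j :: nat
    show "AE \<omega> in M. j \<ge> 1 \<longrightarrow> W j \<omega> \<in> \<Omega>"
    proof (cases "j \<ge> 1")
      case True
      have "AE v in distr M borel (W j). v \<in> \<Omega>" unfolding dist[OF True] by (rule AE\<Omega>)
      from AE_distrD[OF Wm[OF True] this] show ?thesis by simp
    qed simp
  qed
  have G2: "AE \<omega> in M. \<forall>nk :: nat \<times> (int^'p).
      (\<lambda>m. (1/real m) * (\<Sum>j=1..m. indicator {v\<in>\<Omega>. kap (fst nk) v = snd nk} (W j \<omega>)))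
        \<longlonglongrightarrow> measure \<pi>0 {v\<in>\<Omega>. kap (fst nk) v = snd nk}"
    unfolding AE_all_countable
  proof
    fix nk :: "nat \<times> (int^'p)"
    define A where "A = {v\<in>\<Omega>. kap (fst nk) v = snd nk}"
    have Ab: "A \<in> sets borel"
    proof -
      have "A = \<Omega> \<inter> {v. kap (fst nk) v = snd nk}" by (auto simp: A_def)
      then show ?thesis using Omega_b kap_sets by auto
    qed
    have "AE \<omega> in M. (\<lambda>m. (1 / real m) * (\<Sum>j=1..m. indicator A (W j \<omega>))) \<longlonglongrightarrow> integral\<^sup>L \<pi>0 (indicator A)"
      by (rule slln_bounded[OF MP Wm ind dist, where B=1]) (use Ab in \<open>auto simp: indicator_def\<close>)
    then show "AE \<omega> in M. (\<lambda>m. (1/real m) * (\<Sum>j=1..m. indicator {v\<in>\<Omega>. kap (fst nk) v = snd nk} (W j \<omega>)))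
        \<longlonglongrightarrow> measure \<pi>0 {v\<in>\<Omega>. kap (fst nk) v = snd nk}"
      by (simp add: A_def sp)
  qed
  have phix: "continuous_on \<Omega> (\<phi> x)" if "x \<in> unit_cube" for x
  proof -
    have "continuous_on \<Omega> (\<lambda>v. (\<lambda>(x, w). \<phi> x w) (x, v))"
      by (rule continuous_on_compose2[OF phic]) (auto intro!: continuous_intros simp: that)
    then show ?thesis by simp
  qed
  show ?thesis
    using G1 G2
  proof eventually_elim
    case (elim \<omega>)
    show ?case
    proof (intro allI impI)
      fix C :: real and a :: "nat \<Rightarrow> real"
      assume H: "(\<forall>j\<ge>1. \<bar>a j\<bar> \<le> C) \<and>
            (\<forall>x\<in>unit_cube. (\<lambda>m. (1 / real m) * (\<Sum>j=1..m. a j * \<phi> x (W j \<omega>))) \<longlonglongrightarrow> fstar x)"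
      have w\<Omega>: "\<And>j. j \<ge> 1 \<Longrightarrow> W j \<omega> \<in> \<Omega>" using elim(1) by blast
      have ab: "\<And>j. j \<ge> 1 \<Longrightarrow> \<bar>a j\<bar> \<le> C" using H by blast
      have freq: "(\<lambda>m. (1/real m) * (\<Sum>j=1..m. indicator {v\<in>\<Omega>. kap n v = k} (W j \<omega>)))
                   \<longlonglongrightarrow> measure \<pi>0 {v\<in>\<Omega>. kap n v = k}" for n k
        using spec[OF elim(2), of "(n, k)"] by simp
      obtain f where f: "f \<in> borel_measurable \<pi>0" "AE v in \<pi>0. \<bar>f v\<bar> \<le> C"
        "\<And>h L. continuous_on \<Omega> h \<Longrightarrow> (\<lambda>m. (1 / real m) * (\<Sum>j=1..m. a j * h (W j \<omega>))) \<longlonglongrightarrow> L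
            \<Longrightarrow> L = (LINT v:\<Omega>|\<pi>0. f v * h v)"
        using exists_astar[of \<pi>0 \<Omega> "\<lambda>j. W j \<omega>" a C, OF P S cpt AE\<Omega> w\<Omega> ab freq] by blast
      have rep: "\<forall>x\<in>unit_cube. fstar x = (LINT v:\<Omega>|\<pi>0. f v * \<phi> x v)"
        using f(3)[OF phix] H by blast
      have "rf_norm \<pi>0 \<Omega> \<phi> unit_cube fstar \<le> esssup \<pi>0 (\<lambda>v. ereal \<bar>f v\<bar>)"
        unfolding rf_norm_def by (rule Inf_lower) (use f(1) rep in blast)
      also have "\<dots> \<le> ereal C"
        by (rule esssup_I) (use f in auto)
      finally show "(\<exists>astar. astar \<in> borel_measurable \<pi>0 \<and>
                  (AE w in \<pi>0. \<bar>astar w\<bar> \<le> C) \<and>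
                  (\<forall>x\<in>unit_cube. fstar x = (LINT w:\<Omega>|\<pi>0. astar w * \<phi> x w)))
               \<and> rf_norm \<pi>0 \<Omega> \<phi> unit_cube fstar \<le> ereal C"
        using f(1,2) rep by blast
    qed
  qed
qed

end
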